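(* For all integers $k\geq 1$, $V(F_{2k+1}-1)=V(F_{2k+1}-2)=F_{2k-1}$ and $V(F_{2k+2}-2)=F_{2k}$.
   Context: Fibonacci numbers: $F_0=0$, $F_1=1$, $F_{m+2}=F_{m+1}+F_m$. Standard Fibonacci words: $f_{-1}=b$, $f_0=a$, $f_{m+1}=f_mf_{m-1}$. The Fibonacci word ${\bf f}=\lim f_m=abaababa\cdots$, with prefix of length $j$ denoted ${\bf f}(0..j]$. $V(N)$ is the number of factorizations of ${\bf f}(0..N]$ as $f_m^{k_m}\cdots f_0^{k_0}$ with all $k_i\geq 0$ (into standard words $f_i$, $i\geq0$, in non-strictly decreasing order of index), counted up to leading zero exponents; $V(0)=1$. *)

theory Defs
  imports "HOL-Number_Theory.Fib"
begin

datatype letter = La | Lb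

text \<open>Standard Fibonacci words: fw n = f_n, with f_{-1} = b, f_0 = a,
  f_1 = f_0 f_{-1} = ab, f_{n+2} = f_{n+1} f_n.\<close>
fun fw :: "nat \<Rightarrow> letter list" where
  "fw 0 = [La]"
| "fw (Suc 0) = [La, Lb]"
| "fw (Suc (Suc n)) = fw (Suc n) @ fw n"

text \<open>The infinite Fibonacci word (limit of the f_n; f_n is a prefix of f_{n+1}
  and length (fw (Suc j)) > j).\<close>
definition fword :: "nat \<Rightarrow> letter" where
  "fword j = fw (Suc j) ! j"

definition fprefix :: "nat \<Rightarrow> letter list" where
  "fprefix N = map fword [0..<N]"

text \<open>The word f_m^{k_m} ... f_0^{k_0} for the exponent list ks = [k_0, ..., k_m].\<close>
definition fact_word :: "nat list \<Rightarrow> letter list" where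
  "fact_word ks = concat (map (\<lambda>i. concat (replicate (ks ! i) (fw i))) (rev [0..<length ks]))"

text \<open>Factorizations counted up to leading zero exponents: normalized exponent
  lists have nonzero last (= leading) exponent; the empty list is the empty product.\<close>
definition V :: "nat \<Rightarrow> nat" where
  "V N = card {ks. (ks = [] \<or> last ks \<noteq> 0) \<and> fact_word ks = fprefix N}"

end

theory Submission
  imports Defs
begin

fun phi :: "letter list \<Rightarrow> letter list" where
  "phi [] = []"
| "phi (La # xs) = La # Lb # phi xs"
| "phi (Lb # xs) = La # phi xs"

lemma phi_append[simp]: "phi (xs @ ys) = phi xs @ phi ys"
  by (induction xs rule: phi.induct) auto

lemma phi_concat: "phi (concat xss) = concat (map phi xss)"
  by (induction xss) auto

lemma phi_rep: "phi (concat (replicate k w)) = concat (replicate k (phi w))"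
  by (induction k) auto

lemma phi_Nil_iff[simp]: "phi xs = [] \<longleftrightarrow> xs = []"
  by (cases xs rule: phi.cases) auto

lemma phi_hd: "phi xs = [] \<or> (\<exists>ys. phi xs = La # ys)"
  by (cases xs rule: phi.cases) auto

lemma phi_inj: "phi xs = phi ys \<Longrightarrow> xs = ys"
proof (induction xs arbitrary: ys rule: phi.induct)
  case 1 then show ?case by (metis phi_Nil_iff phi.simps(1))
next
  case (2 xs)
  show ?case
  proof (cases ys rule: phi.cases)
    case 1 then show ?thesis using 2 by simp
  next
    case (2 zs) then show ?thesis using "2.IH" "2.prems" by simp
  next
    case (3 zs) then show ?thesis using "2.prems" phi_hd[of zs] by auto
  qed
next
  case (3 xs)
  show ?case
  proof (cases ys rule: phi.cases)
    case 1 then show ?thesis using 3 by simp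
  next
    case (2 zs) then show ?thesis using "3.prems" phi_hd[of xs] by auto
  next
    case (3 zs) then show ?thesis using "3.IH" "3.prems" by simp
  qed
qed

lemma phi_not_bb: "phi x \<noteq> y @ [Lb, Lb]"
proof (cases x rule: rev_exhaust)
  case Nil then show ?thesis by simp
next
  case (snoc x' c)
  then show ?thesis by (cases c) auto
qed

lemma phi_fw: "phi (fw n) = fw (Suc n)"
  by (induction n rule: fw.induct) auto

lemma fact_word_Nil[simp]: "fact_word [] = []"
  by (simp add: fact_word_def)

lemma upt_0_Suc: "[0..<Suc m] = 0 # map Suc [0..<m]"
  by (metis map_Suc_upt upt_conv_Cons zero_less_Suc)

lemma fact_word_Cons: "fact_word (k # ks) = phi (fact_word ks) @ replicate k La"
proof -
  let ?g = "\<lambda>i. concat (replicate ((k # ks) ! i) (fw i))"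
  let ?h = "\<lambda>i. concat (replicate (ks ! i) (fw i))"
  have u: "[0..<Suc (length ks)] = 0 # map Suc [0..<length ks]"
    by (rule upt_0_Suc)
  have "fact_word (k # ks) = concat (map ?g (rev (map Suc [0..<length ks]))) @ ?g 0"
    unfolding fact_word_def length_Cons u by (simp del: upt_Suc)
  also have "?g 0 = replicate k La"
    by (induction k) auto
  also have "concat (map ?g (rev (map Suc [0..<length ks]))) = concat (map (\<lambda>i. phi (?h i)) (rev [0..<length ks]))"
    by (simp add: rev_map phi_rep phi_fw comp_def)
  also have "\<dots> = phi (fact_word ks)"
    unfolding fact_word_def phi_concat by (simp add: comp_def phi_rep phi_fw)
  finally show ?thesis .
qed

definition S :: "letter list \<Rightarrow> nat list set" where
  "S w = {ks. (ks = [] \<or> last ks \<noteq> 0) \<and> fact_word ks = w}"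

lemma fact_word_not_bb: "fact_word ks \<noteq> y @ [Lb, Lb]"
proof (cases ks)
  case Nil then show ?thesis by simp
next
  case (Cons k ks')
  show ?thesis
  proof (cases k)
    case 0 then show ?thesis using Cons by (simp add: fact_word_Cons phi_not_bb)
  next
    case (Suc k') then show ?thesis using Cons
      by (simp add: fact_word_Cons replicate_append_same[symmetric])
  qed
qed

lemma S_Nil: "S [] = {[]}"
proof -
  have "ks = []" if "ks = [] \<or> last ks \<noteq> 0" "fact_word ks = []" for ks
    using that
  proof (induction ks)
    case Nil then show ?case by simp
  next
    case (Cons k ks)
    then have "k = 0" "fact_word ks = []" by (auto simp: fact_word_Cons)
    moreover have "ks = [] \<or> last ks \<noteq> 0" using Cons.prems(1) by (cases ks) auto
    ultimately have "ks = []" using Cons.IH by blast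
    then show ?case using Cons.prems \<open>k = 0\<close> by simp
  qed
  then show ?thesis unfolding S_def by auto
qed

lemma S_b: "S [Lb] = {}"
proof -
  have False if "fact_word ks = [Lb]" for ks
  proof (cases ks)
    case Nil then show ?thesis using that by simp
  next
    case (Cons k ks')
    then show ?thesis using that phi_hd[of "fact_word ks'"]
      by (cases k) (auto simp: fact_word_Cons replicate_append_same[symmetric])
  qed
  then show ?thesis unfolding S_def by auto
qed

lemma S_Cons_iff: "k # ks \<in> S w \<longleftrightarrow>
   (ks = [] \<or> last ks \<noteq> 0) \<and> (ks = [] \<longrightarrow> k \<noteq> 0) \<and> phi (fact_word ks) @ replicate k La = w"
  unfolding S_def by (auto simp: fact_word_Cons)

lemma S_nonempty_Cons: "ks \<in> S w \<Longrightarrow> w \<noteq> [] \<Longrightarrow> \<exists>k ks'. ks = k # ks'"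
  unfolding S_def by (cases ks) auto

lemma last_phi: "x = [] \<or> last x = La \<Longrightarrow> phi x = [] \<or> (\<exists>y. phi x = y @ [Lb])"
proof (cases x rule: rev_exhaust)
  case Nil then show ?thesis by simp
next
  case (snoc x' c)
  assume "x = [] \<or> last x = La"
  then show ?thesis using snoc by auto
qed

lemma rep_Suc_snoc: "replicate (Suc j) a = replicate j a @ [a]"
  by (simp add: replicate_append_same)

lemma S_E1:
  assumes x: "x = [] \<or> last x = La"
  shows "S (phi x @ [La]) = Cons 0 ` S (x @ [Lb]) \<union> Cons 1 ` S x"
proof
  show "S (phi x @ [La]) \<subseteq> Cons 0 ` S (x @ [Lb]) \<union> Cons 1 ` S x"
  proof
    fix ks assume ks: "ks \<in> S (phi x @ [La])"
    then obtain k ks' where kk: "ks = k # ks'" using S_nonempty_Cons by blast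
    let ?F = "fact_word ks'"
    have n: "ks' = [] \<or> last ks' \<noteq> 0" and e: "phi ?F @ replicate k La = phi x @ [La]"
      using ks kk S_Cons_iff by auto
    consider "k = 0" | "k = 1" | j where "k = Suc (Suc j)"
      by (metis One_nat_def not0_implies_Suc)
    then show "ks \<in> Cons 0 ` S (x @ [Lb]) \<union> Cons 1 ` S x"
    proof cases
      case 1
      then have "phi ?F = phi (x @ [Lb])" using e by simp
      then have "?F = x @ [Lb]" by (rule phi_inj)
      then show ?thesis using kk n 1 unfolding S_def by auto
    next
      case 2
      then have "phi ?F = phi x" using e by simp
      then have "?F = x" by (rule phi_inj)
      then show ?thesis using kk n 2 unfolding S_def by auto
    next
      case 3
      have r: "replicate k La = replicate (Suc j) La @ [La]" using 3 by (simp only: rep_Suc_snoc)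
      from e have "(phi ?F @ replicate (Suc j) La) @ [La] = phi x @ [La]" by (simp only: r append_assoc)
      then have q: "phi ?F @ replicate (Suc j) La = phi x" by simp
      then have "phi x \<noteq> []" "last (phi x) = La" by (metis append_is_Nil_conv replicate_Suc list.distinct(1), metis q last_appendR last_replicate replicate_Suc list.distinct(1) Suc_neq_Zero)
      then show ?thesis using last_phi[OF x] by auto
    qed
  qed
next
  show "Cons 0 ` S (x @ [Lb]) \<union> Cons 1 ` S x \<subseteq> S (phi x @ [La])"
    by (auto simp: S_Cons_iff) (auto simp: S_def)
qed

lemma S_E2: "S (phi x @ [La, Lb]) = Cons 0 ` S (x @ [La])"
proof
  show "S (phi x @ [La, Lb]) \<subseteq> Cons 0 ` S (x @ [La])"
  proof
    fix ks assume ks: "ks \<in> S (phi x @ [La, Lb])"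
    then obtain k ks' where kk: "ks = k # ks'" using S_nonempty_Cons by blast
    let ?F = "fact_word ks'"
    have n: "ks' = [] \<or> last ks' \<noteq> 0" and e: "phi ?F @ replicate k La = phi x @ [La, Lb]"
      using ks kk S_Cons_iff by auto
    have "k = 0"
    proof (rule ccontr)
      assume "k \<noteq> 0"
      then obtain j where j: "k = Suc j" using not0_implies_Suc by blast
      have "last (phi ?F @ replicate k La) = La" using j by (simp del: replicate_Suc add: last_replicate)
      moreover have "last (phi x @ [La, Lb]) = Lb" by simp
      ultimately show False using e by simp
    qed
    then have "phi ?F = phi (x @ [La])" using e by simp
    then have "?F = x @ [La]" by (rule phi_inj)
    then show "ks \<in> Cons 0 ` S (x @ [La])" using kk n \<open>k = 0\<close> unfolding S_def by auto
  qed
next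
  show "Cons 0 ` S (x @ [La]) \<subseteq> S (phi x @ [La, Lb])"
    by (auto simp: S_Cons_iff) (auto simp: S_def)
qed

lemma S_E3:
  assumes x: "x = [] \<or> last x = La"
  shows "S (phi x @ [La, La]) = Cons 1 ` S (x @ [Lb]) \<union> Cons 2 ` S x"
proof
  show "S (phi x @ [La, La]) \<subseteq> Cons 1 ` S (x @ [Lb]) \<union> Cons 2 ` S x"
  proof
    fix ks assume ks: "ks \<in> S (phi x @ [La, La])"
    then obtain k ks' where kk: "ks = k # ks'" using S_nonempty_Cons by blast
    let ?F = "fact_word ks'"
    have n: "ks' = [] \<or> last ks' \<noteq> 0" and e: "phi ?F @ replicate k La = phi x @ [La, La]"
      using ks kk S_Cons_iff by auto
    consider "k = 0" | "k = 1" | "k = 2" | j where "k = Suc (Suc (Suc j))"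
      by (metis One_nat_def Suc_1 not0_implies_Suc)
    then show "ks \<in> Cons 1 ` S (x @ [Lb]) \<union> Cons 2 ` S x"
    proof cases
      case 1
      then have "phi ?F = phi (x @ [Lb, Lb])" using e by simp
      then have "?F = x @ [Lb, Lb]" by (rule phi_inj)
      then show ?thesis using fact_word_not_bb by blast
    next
      case 2
      then have "phi ?F = phi (x @ [Lb])" using e by simp
      then have "?F = x @ [Lb]" by (rule phi_inj)
      then show ?thesis using kk n 2 unfolding S_def by auto
    next
      case 3
      then have "phi ?F = phi x" using e by (simp add: numeral_2_eq_2)
      then have "?F = x" by (rule phi_inj)
      then show ?thesis using kk n 3 unfolding S_def by auto
    next
      case 4
      have r: "replicate k La = replicate (Suc j) La @ [La, La]" using 4 by (simp add: replicate_append_same[symmetric])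
      from e have "(phi ?F @ replicate (Suc j) La) @ [La, La] = phi x @ [La, La]" by (simp only: r append_assoc)
      then have q: "phi ?F @ replicate (Suc j) La = phi x" by simp
      then have "phi x \<noteq> []" "last (phi x) = La" by (metis append_is_Nil_conv replicate_Suc list.distinct(1), metis q last_appendR last_replicate replicate_Suc list.distinct(1) Suc_neq_Zero)
      then show ?thesis using last_phi[OF x] by auto
    qed
  qed
next
  show "Cons 1 ` S (x @ [Lb]) \<union> Cons 2 ` S x \<subseteq> S (phi x @ [La, La])"
    by (auto simp: S_Cons_iff numeral_2_eq_2) (auto simp: S_def)
qed

fun cw :: "nat \<Rightarrow> letter list" where
  "cw 0 = []"
| "cw (Suc 0) = []"
| "cw (Suc (Suc n)) = phi (cw (Suc n)) @ [La]"

lemma cw_last: "cw n = [] \<or> last (cw n) = La"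
  by (cases n rule: cw.cases) auto

lemma card_two:
  assumes "finite A" "finite B" "a \<noteq> b"
  shows "card (Cons a ` A \<union> Cons b ` B) = card A + card B"
proof -
  have "card (Cons a ` A \<union> Cons b ` B) = card (Cons a ` A) + card (Cons b ` B)"
    using assms by (intro card_Un_disjoint) auto
  also have "\<dots> = card A + card B"
    by (simp add: card_image)
  finally show ?thesis .
qed

lemma counts: "finite (S (cw (Suc n))) \<and> card (S (cw (Suc n))) = fib (Suc n) \<and>
  finite (S (cw (Suc n) @ [La])) \<and> card (S (cw (Suc n) @ [La])) = fib (Suc n) \<and>
  finite (S (cw (Suc n) @ [Lb])) \<and> card (S (cw (Suc n) @ [Lb])) = fib n"
proof (induction n)
  case 0
  have a: "S [La] = Cons 0 ` S [Lb] \<union> Cons 1 ` S []"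
    using S_E1[of "[]"] by simp
  show ?case by (simp add: S_Nil S_b a)
next
  case (Suc n)
  let ?x = "cw (Suc n)"
  have e1: "S (phi ?x @ [La]) = Cons 0 ` S (?x @ [Lb]) \<union> Cons 1 ` S ?x"
    using S_E1[OF cw_last] .
  have e3: "S (phi ?x @ [La, La]) = Cons 1 ` S (?x @ [Lb]) \<union> Cons 2 ` S ?x"
    using S_E3[OF cw_last] .
  have e2: "S (phi ?x @ [La, Lb]) = Cons 0 ` S (?x @ [La])"
    using S_E2[of ?x] .
  have c: "cw (Suc (Suc n)) = phi ?x @ [La]" by simp
  show ?case
    using Suc.IH by (simp del: cw.simps add: c e1 e2 e3 card_two card_image)
qed

lemma fw_len: "length (fw n) = fib (n + 2)"
  by (induction n rule: fw.induct) (auto simp: numeral_2_eq_2)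

lemma fw_len_gt: "n < length (fw n)"
  by (induction n rule: fw.induct) auto

lemma fw_prefix_Suc: "\<exists>z. fw (Suc n) = fw n @ z"
  by (cases n) auto

lemma fw_prefix: "m \<le> n \<Longrightarrow> \<exists>z. fw n = fw m @ z"
proof (induction n rule: dec_induct)
  case base then show ?case by simp
next
  case (step n)
  then show ?case using fw_prefix_Suc[of n] by (metis append.assoc)
qed

lemma fword_nth: "j < length (fw n) \<Longrightarrow> fword j = fw n ! j"
proof -
  assume j: "j < length (fw n)"
  let ?M = "max (Suc j) n"
  obtain z1 where z1: "fw ?M = fw (Suc j) @ z1" using fw_prefix[of "Suc j" ?M] by auto
  obtain z2 where z2: "fw ?M = fw n @ z2" using fw_prefix[of n ?M] by auto
  have "fword j = fw ?M ! j"
    unfolding fword_def z1 using fw_len_gt[of "Suc j"] by (simp add: nth_append)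
  also have "\<dots> = fw n ! j" unfolding z2 using j by (simp add: nth_append)
  finally show ?thesis .
qed

lemma fprefix_take: "N \<le> length (fw n) \<Longrightarrow> fprefix N = take N (fw n)"
  unfolding fprefix_def by (intro nth_equalityI) (auto simp: fword_nth)

lemma fw_cw: "fw (Suc n) = cw (Suc n) @ (if odd (Suc n) then [La, Lb] else [Lb, La])"
proof (induction n)
  case 0 then show ?case by simp
next
  case (Suc n)
  have "fw (Suc (Suc n)) = phi (fw (Suc n))" by (simp add: phi_fw)
  also have "\<dots> = phi (cw (Suc n)) @ phi (if odd (Suc n) then [La, Lb] else [Lb, La])"
    using Suc.IH by simp
  finally show ?case by auto
qed

lemma V_S: "V N = card (S (fprefix N))"
  unfolding V_def S_def by simp

lemma L1: "V (fib (Suc n + 2) - 2) = fib (Suc n)"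
proof -
  have l: "length (fw (Suc n)) = length (cw (Suc n)) + 2"
    by (subst fw_cw) simp
  have "fprefix (fib (Suc n + 2) - 2) = take (length (cw (Suc n))) (fw (Suc n))"
    using fprefix_take[of "fib (Suc n + 2) - 2" "Suc n"] l fw_len[of "Suc n"] by simp
  also have "\<dots> = cw (Suc n)" by (subst fw_cw) simp
  finally show ?thesis using counts[of n] V_S by simp
qed

lemma L2: "odd (Suc n) \<Longrightarrow> V (fib (Suc n + 2) - 1) = fib (Suc n)"
proof -
  assume o: "odd (Suc n)"
  have l: "length (fw (Suc n)) = length (cw (Suc n)) + 2"
    by (subst fw_cw) simp
  have "fprefix (fib (Suc n + 2) - 1) = take (length (cw (Suc n)) + 1) (fw (Suc n))"
    using fprefix_take[of "fib (Suc n + 2) - 1" "Suc n"] l fw_len[of "Suc n"] by simp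
  also have "\<dots> = cw (Suc n) @ [La]" using o by (subst fw_cw) simp
  finally show ?thesis using counts[of n] V_S by simp
qed

theorem corollary1:
  fixes k :: nat
  assumes "k \<ge> 1"
  shows "V (fib (2*k+1) - 1) = fib (2*k-1) \<and> V (fib (2*k+1) - 2) = fib (2*k-1)
         \<and> V (fib (2*k+2) - 2) = fib (2*k)"
proof -
  obtain m where m: "2*k - 1 = Suc m" "2*k+1 = Suc m + 2" "odd (Suc m)"
    using assms by (intro that[of "2*k-2"]) auto
  obtain p where p: "2*k = Suc p" "2*k+2 = Suc p + 2"
    using assms by (intro that[of "2*k-1"]) auto
  show ?thesis using L1[of m] L2[of m] L1[of p] m p by simp
qed

end
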